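(* Let $\mathcal S=(s_\alpha)_{\alpha\in L(\omega_1)}$ be a ladder system on $\omega_1$ and let $K_{\mathcal S}=\omega_1\cup\{\infty\}$ be the associated ladder system space. Let $A$ be a nonstationary subset of $L(\omega_1)$ and let $\xi:A\to L(\omega_1)$ be an injective map. Then $\xi$ extends to a continuous map $\phi:K_{\mathcal S}\to K_{\mathcal S}$ such that $\phi(\infty)=\infty$ and $\phi(\alpha)=\infty$ for every $\alpha\in L(\omega_1)\setminus A$.
   Context: $L(\omega_1)$ denotes the set of limit ordinals in $\omega_1$ (the first uncountable ordinal) and $S(\omega_1)=\omega_1\setminus L(\omega_1)$. A ladder system on $\omega_1$ is a family $\mathcal S=(s_\alpha)_{\alpha\in L(\omega_1)}$ where for each limit $\alpha$, $s_\alpha=\{s^n_\alpha:n\in\omega\}$ and $(s^n_\alpha)_{n\in\omega}$ is a strictly increasing sequence in $S(\omega_1)$ converging (in the order sense) to $\alpha$. The ladder system topology $\tau_{\mathcal S}$ on $\omega_1$ is the topology in which every element of $S(\omega_1)$ is isolated and the basic neighborhoods of a limit ordinal $\alpha$ are the sets $\{\alpha\}\cup B$ with $B$ a cofinite subset of $s_\alpha$. This is a locally compact Hausdorff space, and $K_{\mathcal S}=\omega_1\cup\{\infty\}$ is its one-point compactification. A subset of $\omega_1$ is nonstationary if it is disjoint from some closed unbounded subset of $\omega_1$. *)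

theory Defs
  imports "HOL-Analysis.Analysis"
begin

text \<open>omega_1 is modelled by a well-ordered type whose universe is uncountable
  and all of whose proper initial segments are countable.\<close>
definition omega1_type :: "'a::wellorder itself \<Rightarrow> bool" where
  "omega1_type _ \<longleftrightarrow> uncountable (UNIV :: 'a set) \<and> (\<forall>\<alpha>::'a. countable {\<beta>. \<beta> < \<alpha>})"

definition limit_ord :: "'a::wellorder \<Rightarrow> bool" where
  "limit_ord \<alpha> \<longleftrightarrow> (\<exists>\<beta>. \<beta> < \<alpha>) \<and> (\<forall>\<beta>. \<beta> < \<alpha> \<longrightarrow> (\<exists>\<gamma>. \<beta> < \<gamma> \<and> \<gamma> < \<alpha>))"

definition L_set :: "'a::wellorder set" where
  "L_set = {\<alpha>. limit_ord \<alpha>}"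

definition S_set :: "'a::wellorder set" where
  "S_set = UNIV - L_set"

definition ladder_system :: "('a::wellorder \<Rightarrow> nat \<Rightarrow> 'a) \<Rightarrow> bool" where
  "ladder_system s \<longleftrightarrow> (\<forall>\<alpha>\<in>L_set.
      strict_mono (s \<alpha>) \<and> (\<forall>n. s \<alpha> n \<in> S_set \<and> s \<alpha> n < \<alpha>) \<and>
      (\<forall>\<beta><\<alpha>. \<exists>n. \<beta> < s \<alpha> n))"

text \<open>The ladder system topology: points of S are isolated; basic neighbourhoods
  of a limit alpha are {alpha} together with a cofinite subset of the ladder s_alpha.\<close>
definition ladder_topology :: "('a::wellorder \<Rightarrow> nat \<Rightarrow> 'a) \<Rightarrow> 'a topology" where
  "ladder_topology s = topology (\<lambda>U. \<forall>\<alpha>\<in>U \<inter> L_set. \<exists>N. \<forall>n\<ge>N. s \<alpha> n \<in> U)"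

text \<open>One-point (Alexandroff) compactification, with None playing the role of infinity.\<close>
definition one_point_compactification :: "'a topology \<Rightarrow> 'a option topology" where
  "one_point_compactification X = topology (\<lambda>V.
      V \<subseteq> insert None (Some ` topspace X) \<and>
      ((None \<notin> V \<and> openin X (Some -` V)) \<or>
       (None \<in> V \<and> closedin X (topspace X - Some -` V) \<and> compactin X (topspace X - Some -` V))))"

definition ladder_space :: "('a::wellorder \<Rightarrow> nat \<Rightarrow> 'a) \<Rightarrow> 'a option topology" where
  "ladder_space s = one_point_compactification (ladder_topology s)"

definition club :: "'a::wellorder set \<Rightarrow> bool" where
  "club C \<longleftrightarrow> (\<forall>\<beta>. \<exists>\<gamma>\<in>C. \<beta> \<le> \<gamma>) \<and>
     (\<forall>\<alpha>. limit_ord \<alpha> \<and> (\<forall>\<beta><\<alpha>. \<exists>\<gamma>\<in>C. \<beta> < \<gamma> \<and> \<gamma> < \<alpha>) \<longrightarrow> \<alpha> \<in> C)"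

definition nonstationary :: "'a::wellorder set \<Rightarrow> bool" where
  "nonstationary A \<longleftrightarrow> (\<exists>C. club C \<and> A \<inter> C = {})"

end

theory Submission
  imports Defs
begin

lemma some_vimage1: "None \<notin> V \<Longrightarrow> V = Some ` (Some -` V)"
proof (rule set_eqI)
  fix x assume "None \<notin> V" then show "x \<in> V \<longleftrightarrow> x \<in> Some ` (Some -` V)" by (cases x) auto
qed

lemma some_vimage2: "None \<in> V \<Longrightarrow> V = insert None (Some ` (Some -` V))"
proof (rule set_eqI)
  fix x assume "None \<in> V" then show "x \<in> V \<longleftrightarrow> x \<in> insert None (Some ` (Some -` V))" by (cases x) auto
qed

lemma opc_eq: "one_point_compactification X = Alexandroff_compactification X"
  unfolding one_point_compactification_def Alexandroff_compactification_def
proof (rule arg_cong[where f=topology], rule ext)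
  fix V :: "'a option set"
  show "(V \<subseteq> insert None (Some ` topspace X) \<and>
      ((None \<notin> V \<and> openin X (Some -` V)) \<or>
       (None \<in> V \<and> closedin X (topspace X - Some -` V) \<and> compactin X (topspace X - Some -` V))))
       = Alexandroff_open X V" (is "?L = ?R")
  proof
    assume L: ?L
    show ?R
    proof (cases "None \<in> V")
      case False
      then have "V = Some ` (Some -` V)" by (rule some_vimage1)
      then show ?thesis using L False unfolding Alexandroff_open_iff by blast
    next
      case True
      have sub: "Some -` V \<subseteq> topspace X" using L by auto
      have "V = insert None (Some ` (Some -` V))" using True by (rule some_vimage2)
      also have "Some -` V = topspace X - (topspace X - Some -` V)" using sub by blast
      finally have "V = insert None (Some ` (topspace X - (topspace X - Some -` V)))" .
      then show ?thesis using L True unfolding Alexandroff_open_iff by blast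
    qed
  next
    assume ?R
    then obtain U where "(V = Some ` U \<and> openin X U) \<or> (V = insert None (Some ` (topspace X - U)) \<and> compactin X U \<and> closedin X U)"
      unfolding Alexandroff_open_iff by blast
    then show ?L
    proof
      assume a: "V = Some ` U \<and> openin X U"
      then have vim: "Some -` V = U" by auto
      have sub: "U \<subseteq> topspace X" using a openin_subset by blast
      have nn: "None \<notin> V" using a by auto
      have "V \<subseteq> insert None (Some ` topspace X)" using a sub by auto
      then show ?L using nn vim a by simp
    next
      assume a: "V = insert None (Some ` (topspace X - U))  \<and> compactin X U \<and> closedin X U"
      have sub: "U \<subseteq> topspace X" using a closedin_subset by blast
      have vim: "Some -` V = topspace X - U" using a by auto
      have eq: "topspace X - Some -` V = U" unfolding vim using sub by blast
      have nn: "None \<in> V" using a by auto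
      have "V \<subseteq> insert None (Some ` topspace X)" using a by auto
      then show ?L using nn eq a by simp
    qed
  qed
qed

lemma openin_ladder: "openin (ladder_topology s) U \<longleftrightarrow> (\<forall>\<alpha>\<in>U \<inter> L_set. \<exists>N. \<forall>n\<ge>N. s \<alpha> n \<in> U)"
proof -
  have "istopology (\<lambda>U. \<forall>\<alpha>\<in>U \<inter> L_set. \<exists>N. \<forall>n\<ge>N. s \<alpha> n \<in> U)"
    unfolding istopology_def
  proof (intro conjI allI impI)
    fix S T assume S: "\<forall>\<alpha>\<in>S \<inter> L_set. \<exists>N. \<forall>n\<ge>N. s \<alpha> n \<in> S"
      and T: "\<forall>\<alpha>\<in>T \<inter> L_set. \<exists>N. \<forall>n\<ge>N. s \<alpha> n \<in> T"
    show "\<forall>\<alpha>\<in>S \<inter> T \<inter> L_set. \<exists>N. \<forall>n\<ge>N. s \<alpha> n \<in> S \<inter> T"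
    proof
      fix \<alpha> assume "\<alpha> \<in> S \<inter> T \<inter> L_set"
      then obtain N1 N2 where "\<forall>n\<ge>N1. s \<alpha> n \<in> S" "\<forall>n\<ge>N2. s \<alpha> n \<in> T" using S T by blast
      then show "\<exists>N. \<forall>n\<ge>N. s \<alpha> n \<in> S \<inter> T" by (rule_tac x="max N1 N2" in exI) auto
    qed
  next
    fix K assume K: "\<forall>S\<in>K. \<forall>\<alpha>\<in>S \<inter> L_set. \<exists>N. \<forall>n\<ge>N. s \<alpha> n \<in> S"
    show "\<forall>\<alpha>\<in>\<Union>K \<inter> L_set. \<exists>N. \<forall>n\<ge>N. s \<alpha> n \<in> \<Union>K"
    proof
      fix \<alpha> assume "\<alpha> \<in> \<Union>K \<inter> L_set"
      then obtain S where S: "S \<in> K" "\<alpha> \<in> S" "\<alpha> \<in> L_set" by blast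
      then obtain M where "\<forall>n\<ge>M. s \<alpha> n \<in> S" using K by blast
      then show "\<exists>N. \<forall>n\<ge>N. s \<alpha> n \<in> \<Union>K" using S(1) by blast
    qed
  qed
  then show ?thesis unfolding ladder_topology_def by simp
qed

lemma topspace_ladder: "topspace (ladder_topology s) = UNIV"
proof -
  have "openin (ladder_topology s) UNIV" unfolding openin_ladder by auto
  then show ?thesis using openin_subset by blast
qed

lemma LS_disj: "x \<in> S_set \<Longrightarrow> x \<notin> L_set"
  unfolding S_set_def by auto

lemma ladderD:
  assumes "ladder_system s" "\<alpha> \<in> L_set"
  shows "strict_mono (s \<alpha>)" "s \<alpha> n \<in> S_set" "s \<alpha> n < \<alpha>" "\<beta> < \<alpha> \<Longrightarrow> \<exists>n. \<beta> < s \<alpha> n"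
  using assms unfolding ladder_system_def by auto

lemma ladder_eventually_above:
  assumes "ladder_system s" "\<alpha> \<in> L_set" "\<beta> < \<alpha>"
  shows "\<exists>M. \<forall>n\<ge>M. \<beta> < s \<alpha> n"
proof -
  obtain M where M: "\<beta> < s \<alpha> M" using ladderD(4)[OF assms] by blast
  have "\<forall>n\<ge>M. \<beta> < s \<alpha> n"
  proof (intro allI impI)
    fix n assume "M \<le> n"
    then have "s \<alpha> M \<le> s \<alpha> n" using ladderD(1)[OF assms(1,2)] by (simp add: strict_mono_less_eq)
    then show "\<beta> < s \<alpha> n" using M by simp
  qed
  then show ?thesis by blast
qed

lemma avoid:
  assumes ls: "ladder_system s" and a: "\<alpha> \<in> L_set" and b: "\<beta> \<in> L_set" and ne: "\<alpha> \<noteq> \<beta>"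
  shows "\<exists>M. \<forall>n\<ge>M. s \<alpha> n \<notin> range (s \<beta>)"
proof (cases "\<alpha> < \<beta>")
  case True
  obtain M where M: "\<forall>m\<ge>M. \<alpha> < s \<beta> m" using ladder_eventually_above[OF ls b True] by blast
  have fin: "finite (s \<alpha> -` (s \<beta> ` {..<M}))"
    by (rule finite_vimageI) (auto intro: strict_mono_imp_inj_on ladderD(1)[OF ls a])
  then obtain K where K: "\<forall>n\<in>s \<alpha> -` (s \<beta> ` {..<M}). n < K"
    using finite_nat_set_iff_bounded by blast
  have "\<forall>n\<ge>K. s \<alpha> n \<notin> range (s \<beta>)"
  proof (intro allI impI notI)
    fix n assume n: "K \<le> n" and "s \<alpha> n \<in> range (s \<beta>)"
    then obtain m where m: "s \<alpha> n = s \<beta> m" by auto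
    show False
    proof (cases "m < M")
      case True
      then have "s \<alpha> n \<in> s \<beta> ` {..<M}" unfolding m by blast
      then have "n \<in> s \<alpha> -` (s \<beta> ` {..<M})" by simp
      then have "n < K" using K by blast
      then show False using n by simp
    next
      case False
      then have "\<alpha> < s \<beta> m" using M by auto
      moreover have "s \<alpha> n < \<alpha>" using ladderD(3)[OF ls a] .
      ultimately show False using m by simp
    qed
  qed
  then show ?thesis by blast
next
  case False
  then have lt: "\<beta> < \<alpha>" using ne by simp
  obtain M where M: "\<forall>n\<ge>M. \<beta> < s \<alpha> n" using ladder_eventually_above[OF ls a lt] by blast
  have "\<forall>n\<ge>M. s \<alpha> n \<notin> range (s \<beta>)"
  proof (intro allI impI notI)
    fix n assume n: "M \<le> n" and "s \<alpha> n \<in> range (s \<beta>)"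
    then obtain m where m: "s \<alpha> n = s \<beta> m" by auto
    have "s \<beta> m < \<beta>" using ladderD(3)[OF ls b] .
    then show False using M n m by (metis less_asym)
  qed
  then show ?thesis by blast
qed

lemma compact_finite_L:
  assumes ls: "ladder_system s" and K: "compactin (ladder_topology s) K"
  shows "finite (K \<inter> L_set)"
proof -
  define Ob where "Ob \<alpha> = insert \<alpha> (range (s \<alpha>))" for \<alpha>
  define \<U> where "\<U> = Ob ` (K \<inter> L_set) \<union> (\<lambda>x. {x}) ` (K - L_set)"
  have opn: "\<forall>B\<in>\<U>. openin (ladder_topology s) B"
  proof
    fix B assume "B \<in> \<U>"
    then consider \<alpha> where "\<alpha> \<in> K \<inter> L_set" "B = Ob \<alpha>" | x where "x \<in> K - L_set" "B = {x}"
      unfolding \<U>_def by blast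
    then show "openin (ladder_topology s) B"
    proof cases
      case 1
      have "\<forall>\<gamma>\<in>B \<inter> L_set. \<gamma> = \<alpha>"
        using 1 ladderD(2)[OF ls] LS_disj unfolding Ob_def by blast
      show ?thesis unfolding openin_ladder
      proof
        fix \<gamma> assume "\<gamma> \<in> B \<inter> L_set"
        then have "\<gamma> = \<alpha>" using \<open>\<forall>\<gamma>\<in>B \<inter> L_set. \<gamma> = \<alpha>\<close> by blast
        then show "\<exists>N. \<forall>n\<ge>N. s \<gamma> n \<in> B" using 1 unfolding Ob_def by auto
      qed
    next
      case 2
      then show ?thesis unfolding openin_ladder by auto
    qed
  qed
  have cov: "K \<subseteq> \<Union>\<U>" unfolding \<U>_def Ob_def by blast
  obtain \<F> where F: "finite \<F>" "\<F> \<subseteq> \<U>" "K \<subseteq> \<Union>\<F>"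
  proof -
    have "\<exists>\<F>. finite \<F> \<and> \<F> \<subseteq> \<U> \<and> K \<subseteq> \<Union>\<F>" using K opn cov unfolding compactin_def by blast
    then show ?thesis using that by blast
  qed
  have each: "finite (B \<inter> L_set)" if "B \<in> \<U>" for B
  proof -
    from that consider \<alpha> where "B = Ob \<alpha>" "\<alpha> \<in> L_set" | x where "B = {x}"
      unfolding \<U>_def by blast
    then show ?thesis
    proof cases
      case 1
      then have "B \<inter> L_set \<subseteq> {\<alpha>}" using ladderD(2)[OF ls] LS_disj unfolding Ob_def
        by (auto dest: ladderD(2)[OF ls])
      then show ?thesis using finite_subset by blast
    qed auto
  qed
  have "K \<inter> L_set \<subseteq> (\<Union>B\<in>\<F>. B \<inter> L_set)" using F by blast
  moreover have "finite (\<Union>B\<in>\<F>. B \<inter> L_set)" using F each by blast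
  ultimately show ?thesis using finite_subset by blast
qed

theorem theorem3:
  fixes s :: "'a::wellorder \<Rightarrow> nat \<Rightarrow> 'a"
    and A :: "'a set"
    and \<xi> :: "'a \<Rightarrow> 'a"
  assumes "omega1_type TYPE('a)"
    and "ladder_system s"
    and "A \<subseteq> L_set"
    and "nonstationary A"
    and "\<xi> ` A \<subseteq> L_set"
    and "inj_on \<xi> A"
  shows "\<exists>\<phi> :: 'a option \<Rightarrow> 'a option.
           continuous_map (ladder_space s) (ladder_space s) \<phi> \<and>
           (\<forall>\<alpha>\<in>A. \<phi> (Some \<alpha>) = Some (\<xi> \<alpha>)) \<and>
           \<phi> None = None \<and>
           (\<forall>\<alpha>\<in>L_set - A. \<phi> (Some \<alpha>) = None)"
proof -
  note ls = assms(2)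
  let ?T = "ladder_topology s"
  obtain C where club: "club C" and AC: "A \<inter> C = {}"
    using assms(4) unfolding nonstationary_def by blast
  have unb: "\<And>\<beta>. \<exists>\<gamma>\<in>C. \<beta> \<le> \<gamma>" using club unfolding club_def by blast
  have cl: "\<And>\<alpha>. limit_ord \<alpha> \<Longrightarrow> (\<forall>\<beta><\<alpha>. \<exists>\<gamma>\<in>C. \<beta> < \<gamma> \<and> \<gamma> < \<alpha>) \<Longrightarrow> \<alpha> \<in> C"
    using club unfolding club_def by blast
  have AL: "\<And>\<alpha>. \<alpha> \<in> A \<Longrightarrow> \<alpha> \<in> L_set" using assms(3) by blast
  have "\<forall>\<alpha>\<in>A. \<exists>\<delta>. \<delta> < \<alpha> \<and> (\<forall>\<gamma>\<in>C. \<gamma> < \<alpha> \<longrightarrow> \<gamma> \<le> \<delta>)"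
  proof
    fix \<alpha> assume a: "\<alpha> \<in> A"
    then have "\<alpha> \<notin> C" using AC by blast
    moreover have "limit_ord \<alpha>" using AL[OF a] unfolding L_set_def by simp
    ultimately have "\<not> (\<forall>\<beta><\<alpha>. \<exists>\<gamma>\<in>C. \<beta> < \<gamma> \<and> \<gamma> < \<alpha>)" using cl by blast
    then show "\<exists>\<delta>. \<delta> < \<alpha> \<and> (\<forall>\<gamma>\<in>C. \<gamma> < \<alpha> \<longrightarrow> \<gamma> \<le> \<delta>)"
      by (meson not_le)
  qed
  then obtain \<delta> where \<delta>: "\<And>\<alpha>. \<alpha> \<in> A \<Longrightarrow> \<delta> \<alpha> < \<alpha> \<and> (\<forall>\<gamma>\<in>C. \<gamma> < \<alpha> \<longrightarrow> \<gamma> \<le> \<delta> \<alpha>)"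
    by metis
  define \<kappa> where "\<kappa> \<alpha> = (LEAST c. c \<in> C \<and> \<alpha> \<le> c)" for \<alpha>
  have \<kappa>1: "\<kappa> \<alpha> \<in> C \<and> \<alpha> \<le> \<kappa> \<alpha>" for \<alpha>
    unfolding \<kappa>_def using unb[of \<alpha>] by (metis (mono_tags, lifting) LeastI)
  have \<kappa>le: "\<kappa> \<beta> \<le> c" if "c \<in> C" "\<beta> \<le> c" for \<beta> c
    unfolding \<kappa>_def using that by (simp add: Least_le)
  have \<kappa>lt: "\<alpha> < \<kappa> \<alpha>" if "\<alpha> \<in> A" for \<alpha>
    using \<kappa>1[of \<alpha>] that AC by (metis IntI empty_iff order.not_eq_order_implies_strict)
  have "\<forall>c::'a. \<exists>f::'a \<Rightarrow> nat. inj_on f {\<beta>. \<beta> < c}"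
    using assms(1) unfolding omega1_type_def countable_def by blast
  then obtain e :: "'a \<Rightarrow> 'a \<Rightarrow> nat" where e: "\<And>c. inj_on (e c) {\<beta>. \<beta> < c}"
    by metis
  define E where "E \<alpha> = e (\<kappa> \<alpha>) \<alpha>" for \<alpha>
  define Bs where "Bs \<alpha> = {\<beta>\<in>A. \<kappa> \<beta> = \<kappa> \<alpha> \<and> E \<beta> < E \<alpha>}" for \<alpha>
  have Bsfin: "finite (Bs \<alpha>)" if "\<alpha> \<in> A" for \<alpha>
  proof -
    have sub: "Bs \<alpha> \<subseteq> {\<beta>. \<beta> < \<kappa> \<alpha>}" unfolding Bs_def using \<kappa>lt by fastforce
    have inj: "inj_on (e (\<kappa> \<alpha>)) (Bs \<alpha>)" using inj_on_subset[OF e sub] .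
    have "e (\<kappa> \<alpha>) ` Bs \<alpha> \<subseteq> {..<E \<alpha>}" unfolding Bs_def E_def by auto
    then have "finite (e (\<kappa> \<alpha>) ` Bs \<alpha>)" using finite_subset by blast
    then show ?thesis using finite_imageD inj by blast
  qed
  have "\<forall>\<alpha>\<in>A. \<exists>N. \<forall>n\<ge>N. \<delta> \<alpha> < s \<alpha> n \<and> (\<forall>\<beta>\<in>Bs \<alpha>. s \<alpha> n \<notin> range (s \<beta>))"
  proof
    fix \<alpha> assume a: "\<alpha> \<in> A"
    have ev1: "eventually (\<lambda>n. \<delta> \<alpha> < s \<alpha> n) sequentially"
      using ladder_eventually_above[OF ls AL[OF a] conjunct1[OF \<delta>[OF a]]]
      by (simp add: eventually_sequentially)
    have "\<forall>\<beta>\<in>Bs \<alpha>. eventually (\<lambda>n. s \<alpha> n \<notin> range (s \<beta>)) sequentially"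
    proof
      fix \<beta> assume b: "\<beta> \<in> Bs \<alpha>"
      then have "\<beta> \<in> A" "\<beta> \<noteq> \<alpha>" unfolding Bs_def by auto
      then show "eventually (\<lambda>n. s \<alpha> n \<notin> range (s \<beta>)) sequentially"
        using avoid[OF ls AL[OF a] AL[of \<beta>]] by (simp add: eventually_sequentially)
    qed
    then have ev2: "eventually (\<lambda>n. \<forall>\<beta>\<in>Bs \<alpha>. s \<alpha> n \<notin> range (s \<beta>)) sequentially"
      by (rule eventually_ball_finite[OF Bsfin[OF a]])
    have "eventually (\<lambda>n. \<delta> \<alpha> < s \<alpha> n \<and> (\<forall>\<beta>\<in>Bs \<alpha>. s \<alpha> n \<notin> range (s \<beta>))) sequentially"
      using eventually_conj[OF ev1 ev2] .
    then show "\<exists>N. \<forall>n\<ge>N. \<delta> \<alpha> < s \<alpha> n \<and> (\<forall>\<beta>\<in>Bs \<alpha>. s \<alpha> n \<notin> range (s \<beta>))"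
      by (simp add: eventually_sequentially)
  qed
  from bchoice[OF this] obtain N where N0: "\<forall>\<alpha>\<in>A. \<forall>n\<ge>N \<alpha>. \<delta> \<alpha> < s \<alpha> n \<and> (\<forall>\<beta>\<in>Bs \<alpha>. s \<alpha> n \<notin> range (s \<beta>))"
    by blast
  have N: "\<And>\<alpha> n. \<alpha> \<in> A \<Longrightarrow> N \<alpha> \<le> n \<Longrightarrow> \<delta> \<alpha> < s \<alpha> n \<and> (\<forall>\<beta>\<in>Bs \<alpha>. s \<alpha> n \<notin> range (s \<beta>))"
    using N0 by blast
  have tails_lt: "s \<alpha> n \<noteq> s \<beta> m" if a: "\<alpha> \<in> A" and b: "\<beta> \<in> A" and ab: "\<alpha> < \<beta>"
    and n: "N \<alpha> \<le> n" and m: "N \<beta> \<le> m" for \<alpha> \<beta> n m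
  proof (cases "\<kappa> \<alpha> = \<kappa> \<beta>")
    case True
    have "\<alpha> \<in> {\<gamma>. \<gamma> < \<kappa> \<alpha>}" "\<beta> \<in> {\<gamma>. \<gamma> < \<kappa> \<alpha>}" using \<kappa>lt[OF a] \<kappa>lt[OF b] True by auto
    then have "e (\<kappa> \<alpha>) \<alpha> \<noteq> e (\<kappa> \<alpha>) \<beta>"
      using inj_on_contraD[OF e[of "\<kappa> \<alpha>"]] ab by (metis less_irrefl)
    then have "E \<alpha> \<noteq> E \<beta>" unfolding E_def using True by simp
    then consider "E \<beta> < E \<alpha>" | "E \<alpha> < E \<beta>" by linarith
    then show ?thesis
    proof cases
      case 1
      then have "\<beta> \<in> Bs \<alpha>" unfolding Bs_def using b True by auto
      then show ?thesis using N[OF a n] by auto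
    next
      case 2
      then have "\<alpha> \<in> Bs \<beta>" unfolding Bs_def using a True by auto
      then show ?thesis using N[OF b m] by (metis rangeI)
    qed
  next
    case False
    have "\<kappa> \<alpha> < \<beta>"
    proof (rule ccontr)
      assume "\<not> \<kappa> \<alpha> < \<beta>"
      then have "\<beta> \<le> \<kappa> \<alpha>" by simp
      then have "\<kappa> \<beta> \<le> \<kappa> \<alpha>" using \<kappa>le \<kappa>1 by blast
      moreover have "\<kappa> \<alpha> \<le> \<kappa> \<beta>" using \<kappa>le[of "\<kappa> \<beta>" \<alpha>] \<kappa>1[of \<beta>] ab by auto
      ultimately show False using False by simp
    qed
    then have "\<kappa> \<alpha> \<le> \<delta> \<beta>" using \<delta>[OF b] \<kappa>1 by blast
    also have "\<delta> \<beta> < s \<beta> m" using N[OF b m] by blast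
    finally have "\<kappa> \<alpha> < s \<beta> m" .
    moreover have "s \<alpha> n < \<alpha>" using ladderD(3)[OF ls AL[OF a]] .
    ultimately show ?thesis using \<kappa>1[of \<alpha>] by (metis leD less_le_trans order.strict_trans)
  qed
  have tails: "s \<alpha> n \<noteq> s \<beta> m" if a: "\<alpha> \<in> A" and b: "\<beta> \<in> A" and ab: "\<alpha> \<noteq> \<beta>"
    and n: "N \<alpha> \<le> n" and m: "N \<beta> \<le> m" for \<alpha> \<beta> n m
    using tails_lt[OF a b _ n m] tails_lt[OF b a _ m n] ab by (metis neqE)
  define D where "D \<alpha> = insert \<alpha> (s \<alpha> ` {N \<alpha>..})" for \<alpha>
  have Ddisj: "\<alpha> = \<beta>" if "\<alpha> \<in> A" "\<beta> \<in> A" "x \<in> D \<alpha>" "x \<in> D \<beta>" for \<alpha> \<beta> x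
  proof (rule ccontr)
    assume ne: "\<alpha> \<noteq> \<beta>"
    have SL: "s \<gamma> k \<noteq> \<gamma>'" if "\<gamma> \<in> A" "\<gamma>' \<in> A" for \<gamma> \<gamma>' k
      using ladderD(2)[OF ls AL[OF that(1)], of k] AL[OF that(2)] LS_disj by blast
    show False using that ne tails[OF that(1,2) ne] SL[OF that(1,2)] SL[OF that(2,1)]
      unfolding D_def by auto
  qed
  define \<phi> where "\<phi> = (\<lambda>y. case y of None \<Rightarrow> None
     | Some x \<Rightarrow> (if \<exists>\<alpha>\<in>A. x \<in> D \<alpha> then Some (\<xi> (THE \<alpha>. \<alpha> \<in> A \<and> x \<in> D \<alpha>)) else None))"
  have \<phi>D: "\<phi> (Some x) = Some (\<xi> \<alpha>)" if "\<alpha> \<in> A" "x \<in> D \<alpha>" for \<alpha> x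
  proof -
    have "(THE \<alpha>. \<alpha> \<in> A \<and> x \<in> D \<alpha>) = \<alpha>"
      using that Ddisj by blast
    then show ?thesis unfolding \<phi>_def using that by auto
  qed
  have \<phi>N: "\<phi> (Some x) = None" if "\<forall>\<alpha>\<in>A. x \<notin> D \<alpha>" for x
    unfolding \<phi>_def using that by auto
  have \<phi>None: "\<phi> None = None" unfolding \<phi>_def by simp
  have openD: "openin ?T (D \<alpha>)" if a: "\<alpha> \<in> A" for \<alpha>
    unfolding openin_ladder
  proof
    fix \<gamma> assume g: "\<gamma> \<in> D \<alpha> \<inter> L_set"
    have "\<gamma> = \<alpha>" using g ladderD(2)[OF ls AL[OF a]] LS_disj unfolding D_def by auto
    then show "\<exists>M. \<forall>n\<ge>M. s \<gamma> n \<in> D \<alpha>" unfolding D_def by auto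
  qed
  have closedD: "closedin ?T (D \<alpha>)" if a: "\<alpha> \<in> A" for \<alpha>
    unfolding closedin_def topspace_ladder openin_ladder
  proof (intro conjI ballI)
    fix \<beta> assume b: "\<beta> \<in> (UNIV - D \<alpha>) \<inter> L_set"
    then have ne: "\<beta> \<noteq> \<alpha>" unfolding D_def by auto
    obtain M where M: "\<forall>n\<ge>M. s \<beta> n \<notin> range (s \<alpha>)"
      using avoid[OF ls _ AL[OF a] ne] b by blast
    have "\<forall>n\<ge>M. s \<beta> n \<notin> D \<alpha>"
    proof (intro allI impI)
      fix n assume "M \<le> n"
      moreover have "s \<beta> n \<noteq> \<alpha>" using ladderD(2)[OF ls, of \<beta> n] b AL[OF a] LS_disj by blast
      ultimately show "s \<beta> n \<notin> D \<alpha>" using M unfolding D_def by auto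
    qed
    then show "\<exists>M. \<forall>n\<ge>M. s \<beta> n \<in> UNIV - D \<alpha>" by blast
  qed auto
  have compactD: "compactin ?T (D \<alpha>)" if a: "\<alpha> \<in> A" for \<alpha>
    unfolding compactin_def topspace_ladder
  proof (intro conjI allI impI)
    fix \<U> assume U: "Ball \<U> (openin ?T) \<and> D \<alpha> \<subseteq> \<Union>\<U>"
    then obtain B0 where B0: "B0 \<in> \<U>" "\<alpha> \<in> B0" unfolding D_def by blast
    then obtain M where M: "\<forall>n\<ge>M. s \<alpha> n \<in> B0"
      using U AL[OF a] unfolding openin_ladder by blast
    have "\<forall>n. \<exists>B. N \<alpha> \<le> n \<longrightarrow> B \<in> \<U> \<and> s \<alpha> n \<in> B"
      using U unfolding D_def by blast
    from choice[OF this] obtain Bn where Bn0: "\<forall>n. N \<alpha> \<le> n \<longrightarrow> Bn n \<in> \<U> \<and> s \<alpha> n \<in> Bn n" by blast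
    then have Bn: "\<And>n. N \<alpha> \<le> n \<Longrightarrow> Bn n \<in> \<U> \<and> s \<alpha> n \<in> Bn n" by blast
    let ?F = "insert B0 (Bn ` {N \<alpha>..<M})"
    have "finite ?F" "?F \<subseteq> \<U>" using B0 Bn by auto
    moreover have "D \<alpha> \<subseteq> \<Union>?F"
    proof
      fix x assume "x \<in> D \<alpha>"
      then consider "x = \<alpha>" | n where "N \<alpha> \<le> n" "x = s \<alpha> n" unfolding D_def by auto
      then show "x \<in> \<Union>?F"
      proof cases
        case 2
        show ?thesis
        proof (cases "n < M")
          case True then show ?thesis using 2 Bn[of n] by auto
        next
          case False then show ?thesis using 2 M by auto
        qed
      qed (use B0 in auto)
    qed
    ultimately show "\<exists>\<F>. finite \<F> \<and> \<F> \<subseteq> \<U> \<and> D \<alpha> \<subseteq> \<Union>\<F>" by blast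
  qed auto
  have LSeq: "ladder_space s = Alexandroff_compactification ?T"
    unfolding ladder_space_def opc_eq ..
  have topK: "topspace (ladder_space s) = UNIV"
  proof -
    have "x \<in> insert None (range Some)" for x :: "'a option" by (cases x) auto
    then show ?thesis unfolding LSeq topspace_Alexandroff_compactification topspace_ladder by blast
  qed
  have cont: "continuous_map (ladder_space s) (ladder_space s) \<phi>"
    unfolding continuous_map_def topK
  proof (intro conjI allI impI ballI)
    fix V assume "openin (ladder_space s) V"
    then consider U where "openin ?T U" "V = Some ` U"
      | K where "compactin ?T K" "closedin ?T K" "V = insert None (Some ` (UNIV - K))"
      unfolding LSeq openin_Alexandroff_compactification topspace_ladder by blast
    then show "openin (ladder_space s) {x \<in> UNIV. \<phi> x \<in> V}"
    proof cases
      case 1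
      define W where "W = (\<Union>\<alpha>\<in>{\<alpha>\<in>A. \<xi> \<alpha> \<in> U}. D \<alpha>)"
      have eq: "{x \<in> UNIV. \<phi> x \<in> V} = Some ` W"
      proof (rule set_eqI)
        fix y show "y \<in> {x \<in> UNIV. \<phi> x \<in> V} \<longleftrightarrow> y \<in> Some ` W"
        proof (cases y)
          case None then show ?thesis using \<phi>None 1 by auto
        next
          case (Some x)
          show ?thesis
          proof (cases "\<exists>\<alpha>\<in>A. x \<in> D \<alpha>")
            case True
            then obtain \<alpha> where a: "\<alpha> \<in> A" "x \<in> D \<alpha>" by blast
            have "x \<in> W \<longleftrightarrow> \<xi> \<alpha> \<in> U" unfolding W_def using a Ddisj by blast
            then show ?thesis using Some \<phi>D[OF a] 1 by auto
          next
            case False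
            then show ?thesis using Some \<phi>N 1 unfolding W_def by auto
          qed
        qed
      qed
      have "openin ?T W" unfolding W_def using openD by (intro openin_Union) auto
      then show ?thesis unfolding eq LSeq by simp
    next
      case 2
      define B where "B = {\<alpha>\<in>A. \<xi> \<alpha> \<in> K}"
      define W where "W = (\<Union>\<alpha>\<in>B. D \<alpha>)"
      have finB: "finite B"
      proof -
        have "\<xi> ` B \<subseteq> K \<inter> L_set" using assms(5) unfolding B_def by auto
        then have "finite (\<xi> ` B)" using compact_finite_L[OF ls 2(1)] finite_subset by blast
        moreover have "inj_on \<xi> B" using assms(6) unfolding B_def by (rule inj_on_subset) auto
        ultimately show ?thesis using finite_imageD by blast
      qed
      have eq: "{x \<in> UNIV. \<phi> x \<in> V} = insert None (Some ` (UNIV - W))"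
      proof (rule set_eqI)
        fix y show "y \<in> {x \<in> UNIV. \<phi> x \<in> V} \<longleftrightarrow> y \<in> insert None (Some ` (UNIV - W))"
        proof (cases y)
          case None then show ?thesis using \<phi>None 2 by auto
        next
          case (Some x)
          show ?thesis
          proof (cases "\<exists>\<alpha>\<in>A. x \<in> D \<alpha>")
            case True
            then obtain \<alpha> where a: "\<alpha> \<in> A" "x \<in> D \<alpha>" by blast
            have "x \<in> W \<longleftrightarrow> \<xi> \<alpha> \<in> K" unfolding W_def B_def using a Ddisj by blast
            then show ?thesis using Some \<phi>D[OF a] 2 by auto
          next
            case False
            then show ?thesis using Some \<phi>N 2 unfolding W_def B_def by auto
          qed
        qed
      qed
      have "compactin ?T W" unfolding W_def using finB compactD B_def
        by (intro compactin_Union) auto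
      moreover have "closedin ?T W" unfolding W_def using finB closedD B_def
        by (intro closedin_Union) auto
      ultimately show ?thesis unfolding eq LSeq openin_Alexandroff_compactification topspace_ladder
        by blast
    qed
  qed auto
  show ?thesis
  proof (intro exI conjI ballI)
    show "continuous_map (ladder_space s) (ladder_space s) \<phi>" by (rule cont)
    show "\<phi> None = None" by (rule \<phi>None)
  next
    fix \<alpha> assume "\<alpha> \<in> A"
    then show "\<phi> (Some \<alpha>) = Some (\<xi> \<alpha>)" using \<phi>D unfolding D_def by blast
  next
    fix \<alpha> assume a: "\<alpha> \<in> L_set - A"
    have "\<forall>\<beta>\<in>A. \<alpha> \<notin> D \<beta>"
    proof
      fix \<beta> assume b: "\<beta> \<in> A"
      have "\<alpha> \<noteq> \<beta>" using a b by auto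
      moreover have "\<forall>n. s \<beta> n \<noteq> \<alpha>" using ladderD(2)[OF ls AL[OF b]] a LS_disj by blast
      ultimately show "\<alpha> \<notin> D \<beta>" unfolding D_def by auto
    qed
    then show "\<phi> (Some \<alpha>) = None" by (rule \<phi>N)
  qed
qed

end
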